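(* Let $G$ be a simplicial group such that $\pi_1(G)$ is finite. Then $H^2(G,\mathbb Z)\cong H^2(\pi_0(G),\mathbb Z)$, where $\mathbb Z$ carries the trivial action.
   Context: Simplicial group $G$ with faces $d_k$; Moore complex $N_0G=G_0$, $N_nG=\bigcap_{k=1}^n\ker d_k$ with differential $d_0$; $B_nNG=d_0(N_{n+1}G)$; $\pi_0(G)=G_0/B_0NG$, $\pi_1(G)=(N_1G\cap\ker d_0)/B_1NG$. $H^n(G,M)$ is the cohomology of $C^n(G,M)=\mathrm{Map}(G_{n-1}\times\cdots\times G_0,M)$ with $(dc)(g_n,\dots,g_0)=c(d_0g_n,\dots,d_0g_1)+\sum_{k=1}^n(-1)^kc(d_kg_n,\dots,d_kg_{k+1},(d_kg_k)g_{k-1},g_{k-2},\dots,g_0)+(-1)^{n+1}\langle g_n\rangle\cdot c(g_{n-1},\dots,g_0)$, $\langle g\rangle$ being the class of $d_1\cdots d_n(g)$ in $\pi_0(G)$ (for trivial coefficients the action is trivial). $H^2(\pi_0(G),\mathbb Z)$ is ordinary group cohomology. *)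

theory Defs
  imports "HOL-Algebra.Coset"
begin

definition simplicial_group ::
  "(nat \<Rightarrow> 'a monoid) \<Rightarrow> (nat \<Rightarrow> nat \<Rightarrow> 'a \<Rightarrow> 'a) \<Rightarrow> (nat \<Rightarrow> nat \<Rightarrow> 'a \<Rightarrow> 'a) \<Rightarrow> bool" where
  "simplicial_group G d s \<longleftrightarrow>
     (\<forall>n. group (G n)) \<and>
     (\<forall>n i. 1 \<le> n \<and> i \<le> n \<longrightarrow> d n i \<in> hom (G n) (G (n - 1))) \<and>
     (\<forall>n j. j \<le> n \<longrightarrow> s n j \<in> hom (G n) (G (Suc n))) \<and>
     (\<forall>n i j x. 2 \<le> n \<and> i < j \<and> j \<le> n \<and> x \<in> carrier (G n) \<longrightarrow>
        d (n - 1) i (d n j x) = d (n - 1) (j - 1) (d n i x)) \<and>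
     (\<forall>n i j x. i < j \<and> j \<le> n \<and> x \<in> carrier (G n) \<longrightarrow>
        d (Suc n) i (s n j x) = s (n - 1) (j - 1) (d n i x)) \<and>
     (\<forall>n i j x. j \<le> n \<and> (i = j \<or> i = Suc j) \<and> x \<in> carrier (G n) \<longrightarrow>
        d (Suc n) i (s n j x) = x) \<and>
     (\<forall>n i j x. Suc j < i \<and> i \<le> Suc n \<and> j \<le> n \<and> x \<in> carrier (G n) \<longrightarrow>
        d (Suc n) i (s n j x) = s (n - 1) j (d n (i - 1) x)) \<and>
     (\<forall>n i j x. i \<le> j \<and> j \<le> n \<and> x \<in> carrier (G n) \<longrightarrow>
        s (Suc n) i (s n j x) = s (Suc n) (Suc j) (s n i x))"

definition N1 where "N1 G d = {g \<in> carrier (G 1). d 1 1 g = \<one>\<^bsub>G 0\<^esub>}"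
definition N2 where
  "N2 G d = {g \<in> carrier (G 2). d 2 1 g = \<one>\<^bsub>G 1\<^esub> \<and> d 2 2 g = \<one>\<^bsub>G 1\<^esub>}"
definition B0 where "B0 G d = d 1 0 ` N1 G d"
definition B1 where "B1 G d = d 2 0 ` N2 G d"

definition pi0 :: "(nat \<Rightarrow> 'a monoid) \<Rightarrow> (nat \<Rightarrow> nat \<Rightarrow> 'a \<Rightarrow> 'a) \<Rightarrow> 'a set monoid" where
  "pi0 G d = G 0 Mod B0 G d"

definition pi1 :: "(nat \<Rightarrow> 'a monoid) \<Rightarrow> (nat \<Rightarrow> nat \<Rightarrow> 'a \<Rightarrow> 'a) \<Rightarrow> 'a set monoid" where
  "pi1 G d = ((G 1)\<lparr>carrier := {g \<in> N1 G d. d 1 0 g = \<one>\<^bsub>G 0\<^esub>}\<rparr>) Mod B1 G d"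

definition cochain_grp :: "'x set \<Rightarrow> ('x \<Rightarrow> int) monoid" where
  "cochain_grp A = \<lparr>carrier = PiE A (\<lambda>_. (UNIV :: int set)),
                    mult = (\<lambda>c c'. \<lambda>x\<in>A. c x + c' x),
                    one = (\<lambda>x\<in>A. 0)\<rparr>"

definition cohom_grp ::
  "'x set \<Rightarrow> 'x set \<Rightarrow> (('x \<Rightarrow> int) \<Rightarrow> ('x \<Rightarrow> int)) \<Rightarrow> ('x \<Rightarrow> int) set \<Rightarrow> ('x \<Rightarrow> int) set monoid" where
  "cohom_grp A Bn delta Bd =
     ((cochain_grp A)\<lparr>carrier := {c \<in> carrier (cochain_grp A). delta c = \<one>\<^bsub>cochain_grp Bn\<^esub>}\<rparr>)
       Mod Bd"

text \<open>Tuples (g_{n-1},...,g_0) with g_i in G_i, represented as lists xs of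
  length n with xs ! i = g_{n-1-i}.\<close>
definition sX :: "(nat \<Rightarrow> 'a monoid) \<Rightarrow> nat \<Rightarrow> 'a list set" where
  "sX G n = {xs. length xs = n \<and> (\<forall>i<n. xs ! i \<in> carrier (G (n - 1 - i)))}"

text \<open>The differential C^n -> C^{n+1}; for an input list xs of length n+1,
  g_j = xs ! (n - j).  Trivial action of pi_0 on Z.\<close>
definition sdiff ::
  "(nat \<Rightarrow> 'a monoid) \<Rightarrow> (nat \<Rightarrow> nat \<Rightarrow> 'a \<Rightarrow> 'a) \<Rightarrow> nat \<Rightarrow> ('a list \<Rightarrow> int) \<Rightarrow> ('a list \<Rightarrow> int)" where
  "sdiff G d n c = (\<lambda>xs \<in> sX G (Suc n). let g = (\<lambda>j. xs ! (n - j)) in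
      c (map (\<lambda>j. d j 0 (g j)) (rev [1..<Suc n]))
    + (\<Sum>k\<in>{1..n}. (-1) ^ k *
         c (map (\<lambda>j. d j k (g j)) (rev [Suc k..<Suc n])
            @ [d k k (g k) \<otimes>\<^bsub>G (k - 1)\<^esub> g (k - 1)]
            @ map g (rev [0..<k - 1])))
    + (-1) ^ (Suc n) * c (map g (rev [0..<n])))"

text \<open>H^n(G, Z) for n >= 1.\<close>
definition sgrp_cohom ::
  "(nat \<Rightarrow> 'a monoid) \<Rightarrow> (nat \<Rightarrow> nat \<Rightarrow> 'a \<Rightarrow> 'a) \<Rightarrow> nat \<Rightarrow> ('a list \<Rightarrow> int) set monoid" where
  "sgrp_cohom G d n = cohom_grp (sX G n) (sX G (Suc n)) (sdiff G d n)
      (sdiff G d (n - 1) ` carrier (cochain_grp (sX G (n - 1))))"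

text \<open>Inhomogeneous cochains: functions on n-tuples (q_1,...,q_n), q_i = xs ! (i-1).\<close>
definition gX :: "('b, 'c) monoid_scheme \<Rightarrow> nat \<Rightarrow> 'b list set" where
  "gX Q n = {xs. length xs = n \<and> set xs \<subseteq> carrier Q}"

definition gdiff :: "('b, 'c) monoid_scheme \<Rightarrow> nat \<Rightarrow> ('b list \<Rightarrow> int) \<Rightarrow> ('b list \<Rightarrow> int)" where
  "gdiff Q n f = (\<lambda>xs \<in> gX Q (Suc n).
      f (tl xs)
    + (\<Sum>i\<in>{1..n}. (-1) ^ i *
         f (take (i - 1) xs @ [xs ! (i - 1) \<otimes>\<^bsub>Q\<^esub> xs ! i] @ drop (Suc i) xs))
    + (-1) ^ (Suc n) * f (butlast xs))"

text \<open>H^n(Q, Z) for n >= 1.\<close>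
definition grp_cohom :: "('b, 'c) monoid_scheme \<Rightarrow> nat \<Rightarrow> ('b list \<Rightarrow> int) set monoid" where
  "grp_cohom Q n = cohom_grp (gX Q n) (gX Q (Suc n)) (gdiff Q n)
      (gdiff Q (n - 1) ` carrier (cochain_grp (gX Q (n - 1))))"

end

theory Submission
  imports Defs
begin



lemma cochain_carrier: "carrier (cochain_grp A) = PiE A (\<lambda>_. UNIV)"
  by (simp add: cochain_grp_def)
lemma cochain_mult: "x \<otimes>\<^bsub>cochain_grp A\<^esub> y = (\<lambda>a\<in>A. x a + y a)"
  by (simp add: cochain_grp_def)
lemma cochain_one: "\<one>\<^bsub>cochain_grp A\<^esub> = (\<lambda>a\<in>A. 0)"
  by (simp add: cochain_grp_def)

lemma cochain_comm_group: "comm_group (cochain_grp A)"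
proof (rule comm_groupI)
  fix x assume x: "x \<in> carrier (cochain_grp A)"
  show "\<one>\<^bsub>cochain_grp A\<^esub> \<otimes>\<^bsub>cochain_grp A\<^esub> x = x"
    using x by (auto simp: cochain_grp_def PiE_def extensional_def)
  show "\<exists>y\<in>carrier (cochain_grp A). y \<otimes>\<^bsub>cochain_grp A\<^esub> x = \<one>\<^bsub>cochain_grp A\<^esub>"
    by (rule bexI[of _ "\<lambda>a\<in>A. - x a"]) (auto simp: cochain_grp_def)
qed (auto simp: cochain_grp_def add.commute add.assoc)

lemma cochain_inv: "x \<in> carrier (cochain_grp A) \<Longrightarrow> inv\<^bsub>cochain_grp A\<^esub> x = (\<lambda>a\<in>A. - x a)"
proof -
  interpret comm_group "cochain_grp A" by (rule cochain_comm_group)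
  assume x: "x \<in> carrier (cochain_grp A)"
  have "(\<lambda>a\<in>A. - x a) \<in> carrier (cochain_grp A)" by (simp add: cochain_grp_def)
  moreover have "(\<lambda>a\<in>A. - x a) \<otimes>\<^bsub>cochain_grp A\<^esub> x = \<one>\<^bsub>cochain_grp A\<^esub>"
    by (auto simp: cochain_grp_def)
  ultimately show ?thesis using x by (metis inv_unique' m_comm)
qed

definition Zgrp :: "'x set \<Rightarrow> 'x set \<Rightarrow> (('x \<Rightarrow> int) \<Rightarrow> ('x \<Rightarrow> int)) \<Rightarrow> ('x \<Rightarrow> int) monoid" where
  "Zgrp A Bn delta = (cochain_grp A)\<lparr>carrier := {c \<in> carrier (cochain_grp A). delta c = \<one>\<^bsub>cochain_grp Bn\<^esub>}\<rparr>"

lemma cohom_grp_Zgrp: "cohom_grp A Bn delta Bd = Zgrp A Bn delta Mod Bd"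
  by (simp add: cohom_grp_def Zgrp_def)

lemma Zgrp_facts:
  assumes hd: "delta \<in> hom (cochain_grp A) (cochain_grp Bn)"
  shows "comm_group (Zgrp A Bn delta)"
    and "subgroup (carrier (Zgrp A Bn delta)) (cochain_grp A)"
proof -
  interpret C: comm_group "cochain_grp A" by (rule cochain_comm_group)
  interpret D: comm_group "cochain_grp Bn" by (rule cochain_comm_group)
  interpret h: group_hom "cochain_grp A" "cochain_grp Bn" delta
    by (simp add: group_hom_def group_hom_axioms_def hd C.group_axioms D.group_axioms)
  have eq: "carrier (Zgrp A Bn delta) = kernel (cochain_grp A) (cochain_grp Bn) delta"
    by (simp add: Zgrp_def kernel_def)
  show sg: "subgroup (carrier (Zgrp A Bn delta)) (cochain_grp A)"
    using eq h.subgroup_kernel by simp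
  have "group (Zgrp A Bn delta)"
    using C.subgroup_imp_group[OF sg] by (simp add: Zgrp_def)
  then show "comm_group (Zgrp A Bn delta)"
    by (rule group.group_comm_groupI) (simp add: Zgrp_def, metis C.m_comm sg subgroup.mem_carrier)
qed

lemma cohom_facts:
  assumes hd: "delta \<in> hom (cochain_grp A) (cochain_grp Bn)"
    and hd': "delta' \<in> hom (cochain_grp A') (cochain_grp A)"
    and dd: "\<And>c. c \<in> carrier (cochain_grp A') \<Longrightarrow> delta (delta' c) = \<one>\<^bsub>cochain_grp Bn\<^esub>"
  shows "subgroup (delta' ` carrier (cochain_grp A')) (Zgrp A Bn delta)"
    and "delta' ` carrier (cochain_grp A') \<lhd> Zgrp A Bn delta"
    and "group (cohom_grp A Bn delta (delta' ` carrier (cochain_grp A')))"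
proof -
  interpret C: comm_group "cochain_grp A" by (rule cochain_comm_group)
  interpret C': comm_group "cochain_grp A'" by (rule cochain_comm_group)
  interpret h': group_hom "cochain_grp A'" "cochain_grp A" delta'
    by (simp add: group_hom_def group_hom_axioms_def hd' C.group_axioms C'.group_axioms)
  interpret Z: comm_group "Zgrp A Bn delta" by (rule Zgrp_facts(1)[OF hd])
  have sZ: "subgroup (carrier (Zgrp A Bn delta)) (cochain_grp A)" by (rule Zgrp_facts(2)[OF hd])
  have sub: "delta' ` carrier (cochain_grp A') \<subseteq> carrier (Zgrp A Bn delta)"
    using dd hd' by (auto simp: Zgrp_def hom_def)
  have "subgroup (delta' ` carrier (cochain_grp A')) (cochain_grp A\<lparr>carrier := carrier (Zgrp A Bn delta)\<rparr>)"
    by (rule C.subgroup_incl[OF h'.img_is_subgroup sZ sub])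
  moreover have "cochain_grp A\<lparr>carrier := carrier (Zgrp A Bn delta)\<rparr> = Zgrp A Bn delta"
    by (simp add: Zgrp_def)
  ultimately show sg: "subgroup (delta' ` carrier (cochain_grp A')) (Zgrp A Bn delta)" by simp
  show n: "delta' ` carrier (cochain_grp A') \<lhd> Zgrp A Bn delta"
    by (rule Z.subgroup_imp_normal[OF sg])
  show "group (cohom_grp A Bn delta (delta' ` carrier (cochain_grp A')))"
    unfolding cohom_grp_Zgrp by (rule normal.factorgroup_is_group[OF n])
qed




locale SG =
  fixes G :: "nat \<Rightarrow> 'a monoid" and d :: "nat \<Rightarrow> nat \<Rightarrow> 'a \<Rightarrow> 'a" and s :: "nat \<Rightarrow> nat \<Rightarrow> 'a \<Rightarrow> 'a"
  assumes SG: "simplicial_group G d s"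
begin

lemma grp: "group (G n)" using SG by (simp add: simplicial_group_def)

lemma dhom: "1 \<le> n \<Longrightarrow> i \<le> n \<Longrightarrow> group_hom (G n) (G (n - 1)) (d n i)"
  using SG grp by (simp add: simplicial_group_def group_hom_def group_hom_axioms_def)
lemma shom: "j \<le> n \<Longrightarrow> group_hom (G n) (G (Suc n)) (s n j)"
  using SG grp by (simp add: simplicial_group_def group_hom_def group_hom_axioms_def)

lemma h10: "group_hom (G 1) (G 0) (d 1 0)" using dhom[of 1 0] by simp
lemma h11: "group_hom (G 1) (G 0) (d 1 1)" using dhom[of 1 1] by simp
lemma h20: "group_hom (G 2) (G 1) (d 2 0)" using dhom[of 2 0] by simp
lemma h21: "group_hom (G 2) (G 1) (d 2 1)" using dhom[of 2 1] by simp
lemma h22: "group_hom (G 2) (G 1) (d 2 2)" using dhom[of 2 2] by simp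
lemma hs00: "group_hom (G 0) (G 1) (s 0 0)" using shom[of 0 0] by simp
lemma hs10: "group_hom (G 1) (G 2) (s 1 0)" using shom[of 0 1] by (simp add: numeral_2_eq_2)
lemma hs11: "group_hom (G 1) (G 2) (s 1 1)" using shom[of 1 1] by (simp add: numeral_2_eq_2)

lemmas SGu = SG[unfolded simplicial_group_def]
lemmas A4 = SGu[THEN conjunct2, THEN conjunct2, THEN conjunct2, THEN conjunct1]
lemmas A5 = SGu[THEN conjunct2, THEN conjunct2, THEN conjunct2, THEN conjunct2, THEN conjunct1]
lemmas A6 = SGu[THEN conjunct2, THEN conjunct2, THEN conjunct2, THEN conjunct2, THEN conjunct2, THEN conjunct1]
lemmas A7 = SGu[THEN conjunct2, THEN conjunct2, THEN conjunct2, THEN conjunct2, THEN conjunct2, THEN conjunct2, THEN conjunct1]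

lemma ff: "x \<in> carrier (G 2) \<Longrightarrow> d 1 0 (d 2 1 x) = d 1 0 (d 2 0 x)"
   "x \<in> carrier (G 2) \<Longrightarrow> d 1 0 (d 2 2 x) = d 1 1 (d 2 0 x)"
   "x \<in> carrier (G 2) \<Longrightarrow> d 1 1 (d 2 2 x) = d 1 1 (d 2 1 x)"
  using A4[rule_format, of 2 0 1 x] A4[rule_format, of 2 0 2 x] A4[rule_format, of 2 1 2 x] by simp_all

lemma fs: "g \<in> carrier (G 0) \<Longrightarrow> d 1 0 (s 0 0 g) = g"
  "g \<in> carrier (G 0) \<Longrightarrow> d 1 1 (s 0 0 g) = g"
  "y \<in> carrier (G 1) \<Longrightarrow> d 2 0 (s 1 0 y) = y"
  "y \<in> carrier (G 1) \<Longrightarrow> d 2 1 (s 1 0 y) = y"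
  "y \<in> carrier (G 1) \<Longrightarrow> d 2 2 (s 1 0 y) = s 0 0 (d 1 1 y)"
  "y \<in> carrier (G 1) \<Longrightarrow> d 2 0 (s 1 1 y) = s 0 0 (d 1 0 y)"
  "y \<in> carrier (G 1) \<Longrightarrow> d 2 1 (s 1 1 y) = y"
  "y \<in> carrier (G 1) \<Longrightarrow> d 2 2 (s 1 1 y) = y"
  using A6[rule_format, of 0 0 0 g] A6[rule_format, of 0 0 1 g]
    A6[rule_format, of 0 1 0 y] A6[rule_format, of 0 1 1 y] A7[rule_format, of 0 2 1 y]
    A5[rule_format, of 0 1 1 y] A6[rule_format, of 1 1 1 y] A6[rule_format, of 1 1 2 y]
  by (simp_all add: numeral_2_eq_2)


lemma G0: "group (G 0)" and G1: "group (G 1)" and G2: "group (G 2)" by (rule grp)+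

lemma mem[simp]:
  "x \<in> carrier (G 1) \<Longrightarrow> d 1 0 x \<in> carrier (G 0)"
  "x \<in> carrier (G 1) \<Longrightarrow> d 1 1 x \<in> carrier (G 0)"
  "y \<in> carrier (G 2) \<Longrightarrow> d 2 0 y \<in> carrier (G 1)"
  "y \<in> carrier (G 2) \<Longrightarrow> d 2 1 y \<in> carrier (G 1)"
  "y \<in> carrier (G 2) \<Longrightarrow> d 2 2 y \<in> carrier (G 1)"
  "g \<in> carrier (G 0) \<Longrightarrow> s 0 0 g \<in> carrier (G 1)"
  "x \<in> carrier (G 1) \<Longrightarrow> s 1 0 x \<in> carrier (G 2)"
  "x \<in> carrier (G 1) \<Longrightarrow> s 1 1 x \<in> carrier (G 2)"
  using group_hom.hom_closed[OF h10] group_hom.hom_closed[OF h11] group_hom.hom_closed[OF h20]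
    group_hom.hom_closed[OF h21] group_hom.hom_closed[OF h22] group_hom.hom_closed[OF hs00]
    group_hom.hom_closed[OF hs10] group_hom.hom_closed[OF hs11] by auto

lemma hmult[simp]:
  "x \<in> carrier (G 1) \<Longrightarrow> y \<in> carrier (G 1) \<Longrightarrow> d 1 0 (x \<otimes>\<^bsub>G 1\<^esub> y) = d 1 0 x \<otimes>\<^bsub>G 0\<^esub> d 1 0 y"
  "x \<in> carrier (G 1) \<Longrightarrow> y \<in> carrier (G 1) \<Longrightarrow> d 1 1 (x \<otimes>\<^bsub>G 1\<^esub> y) = d 1 1 x \<otimes>\<^bsub>G 0\<^esub> d 1 1 y"
  "u \<in> carrier (G 2) \<Longrightarrow> v \<in> carrier (G 2) \<Longrightarrow> d 2 0 (u \<otimes>\<^bsub>G 2\<^esub> v) = d 2 0 u \<otimes>\<^bsub>G 1\<^esub> d 2 0 v"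
  "u \<in> carrier (G 2) \<Longrightarrow> v \<in> carrier (G 2) \<Longrightarrow> d 2 1 (u \<otimes>\<^bsub>G 2\<^esub> v) = d 2 1 u \<otimes>\<^bsub>G 1\<^esub> d 2 1 v"
  "u \<in> carrier (G 2) \<Longrightarrow> v \<in> carrier (G 2) \<Longrightarrow> d 2 2 (u \<otimes>\<^bsub>G 2\<^esub> v) = d 2 2 u \<otimes>\<^bsub>G 1\<^esub> d 2 2 v"
  "g \<in> carrier (G 0) \<Longrightarrow> h \<in> carrier (G 0) \<Longrightarrow> s 0 0 (g \<otimes>\<^bsub>G 0\<^esub> h) = s 0 0 g \<otimes>\<^bsub>G 1\<^esub> s 0 0 h"
  "x \<in> carrier (G 1) \<Longrightarrow> y \<in> carrier (G 1) \<Longrightarrow> s 1 0 (x \<otimes>\<^bsub>G 1\<^esub> y) = s 1 0 x \<otimes>\<^bsub>G 2\<^esub> s 1 0 y"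
  "x \<in> carrier (G 1) \<Longrightarrow> y \<in> carrier (G 1) \<Longrightarrow> s 1 1 (x \<otimes>\<^bsub>G 1\<^esub> y) = s 1 1 x \<otimes>\<^bsub>G 2\<^esub> s 1 1 y"
  using group_hom.hom_mult[OF h10] group_hom.hom_mult[OF h11] group_hom.hom_mult[OF h20]
    group_hom.hom_mult[OF h21] group_hom.hom_mult[OF h22] group_hom.hom_mult[OF hs00]
    group_hom.hom_mult[OF hs10] group_hom.hom_mult[OF hs11] by auto

lemma hone[simp]:
  "d 1 0 \<one>\<^bsub>G 1\<^esub> = \<one>\<^bsub>G 0\<^esub>" "d 1 1 \<one>\<^bsub>G 1\<^esub> = \<one>\<^bsub>G 0\<^esub>"
  "d 2 0 \<one>\<^bsub>G 2\<^esub> = \<one>\<^bsub>G 1\<^esub>" "d 2 1 \<one>\<^bsub>G 2\<^esub> = \<one>\<^bsub>G 1\<^esub>" "d 2 2 \<one>\<^bsub>G 2\<^esub> = \<one>\<^bsub>G 1\<^esub>"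
  "s 0 0 \<one>\<^bsub>G 0\<^esub> = \<one>\<^bsub>G 1\<^esub>" "s 1 0 \<one>\<^bsub>G 1\<^esub> = \<one>\<^bsub>G 2\<^esub>" "s 1 1 \<one>\<^bsub>G 1\<^esub> = \<one>\<^bsub>G 2\<^esub>"
  using group_hom.hom_one[OF h10] group_hom.hom_one[OF h11] group_hom.hom_one[OF h20]
    group_hom.hom_one[OF h21] group_hom.hom_one[OF h22] group_hom.hom_one[OF hs00]
    group_hom.hom_one[OF hs10] group_hom.hom_one[OF hs11] by auto

lemma hinv[simp]:
  "x \<in> carrier (G 1) \<Longrightarrow> d 1 0 (inv\<^bsub>G 1\<^esub> x) = inv\<^bsub>G 0\<^esub> (d 1 0 x)"
  "x \<in> carrier (G 1) \<Longrightarrow> d 1 1 (inv\<^bsub>G 1\<^esub> x) = inv\<^bsub>G 0\<^esub> (d 1 1 x)"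
  "g \<in> carrier (G 0) \<Longrightarrow> s 0 0 (inv\<^bsub>G 0\<^esub> g) = inv\<^bsub>G 1\<^esub> (s 0 0 g)"
  "u \<in> carrier (G 2) \<Longrightarrow> d 2 0 (inv\<^bsub>G 2\<^esub> u) = inv\<^bsub>G 1\<^esub> (d 2 0 u)"
  using group_hom.hom_inv[OF h10] group_hom.hom_inv[OF h11] group_hom.hom_inv[OF hs00]
    group_hom.hom_inv[OF h20] by auto

end



declare One_nat_def[simp del]

context SG begin

declare fs[simp] ff[simp]

lemma gcl[simp]:
  "x \<in> carrier (G n) \<Longrightarrow> y \<in> carrier (G n) \<Longrightarrow> x \<otimes>\<^bsub>G n\<^esub> y \<in> carrier (G n)"
  "x \<in> carrier (G n) \<Longrightarrow> inv\<^bsub>G n\<^esub> x \<in> carrier (G n)"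
  "\<one>\<^bsub>G n\<^esub> \<in> carrier (G n)"
  using grp[of n] by (simp_all add: group.is_monoid monoid.m_closed group.inv_closed monoid.one_closed)

lemma N1_kernel: "N1 G d = kernel (G 1) (G 0) (d 1 1)"
  by (simp add: N1_def kernel_def)

lemma N1_sub: "subgroup (N1 G d) (G 1)"
  unfolding N1_kernel by (rule group_hom.subgroup_kernel[OF h11])

lemma N1I: "x \<in> carrier (G 1) \<Longrightarrow> d 1 1 x = \<one>\<^bsub>G 0\<^esub> \<Longrightarrow> x \<in> N1 G d"
  by (simp add: N1_def)
lemma N1D: "x \<in> N1 G d \<Longrightarrow> x \<in> carrier (G 1)" "x \<in> N1 G d \<Longrightarrow> d 1 1 x = \<one>\<^bsub>G 0\<^esub>"
  by (simp_all add: N1_def)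

lemma B0_sub: "subgroup (B0 G d) (G 0)"
  unfolding B0_def by (rule group_hom.subgroup_img_is_subgroup[OF h10 N1_sub])

lemma B0_normal: "B0 G d \<lhd> G 0"
proof -
  interpret G0: group "G 0" by (rule G0)
  interpret G1: group "G 1" by (rule G1)
  have "\<forall>x\<in>carrier (G 0). \<forall>h\<in>B0 G d. x \<otimes>\<^bsub>G 0\<^esub> h \<otimes>\<^bsub>G 0\<^esub> inv\<^bsub>G 0\<^esub> x \<in> B0 G d"
  proof (intro ballI)
    fix x h assume x: "x \<in> carrier (G 0)" and h: "h \<in> B0 G d"
    then obtain n where n: "n \<in> N1 G d" "h = d 1 0 n" unfolding B0_def by auto
    have nc: "n \<in> carrier (G 1)" using n N1D by auto
    let ?m = "s 0 0 x \<otimes>\<^bsub>G 1\<^esub> n \<otimes>\<^bsub>G 1\<^esub> inv\<^bsub>G 1\<^esub> (s 0 0 x)"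
    have mN: "?m \<in> N1 G d"
      using x nc N1D[OF n(1)] by (intro N1I) (simp_all)
    have "d 1 0 ?m = x \<otimes>\<^bsub>G 0\<^esub> h \<otimes>\<^bsub>G 0\<^esub> inv\<^bsub>G 0\<^esub> x"
      using x nc n by (simp)
    then show "x \<otimes>\<^bsub>G 0\<^esub> h \<otimes>\<^bsub>G 0\<^esub> inv\<^bsub>G 0\<^esub> x \<in> B0 G d"
      using mN unfolding B0_def by (metis image_eqI)
  qed
  then show ?thesis using G0.normal_inv_iff B0_sub by blast
qed

lemma pi0_group: "group (pi0 G d)"
  unfolding pi0_def by (rule normal.factorgroup_is_group[OF B0_normal])

definition P :: "'a \<Rightarrow> 'a set" where "P g = B0 G d #>\<^bsub>G 0\<^esub> g"

lemma P_hom: "P \<in> hom (G 0) (pi0 G d)"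
  using normal.r_coset_hom_Mod[OF B0_normal] unfolding pi0_def P_def[abs_def] by simp

lemma P_mem[simp]: "g \<in> carrier (G 0) \<Longrightarrow> P g \<in> carrier (pi0 G d)"
  using P_hom by (auto simp: hom_def)

lemma P_mult: "g \<in> carrier (G 0) \<Longrightarrow> h \<in> carrier (G 0) \<Longrightarrow> P (g \<otimes>\<^bsub>G 0\<^esub> h) = P g \<otimes>\<^bsub>pi0 G d\<^esub> P h"
  using P_hom by (auto simp: hom_def)

lemma P_carrier: "carrier (pi0 G d) = P ` carrier (G 0)"
  by (auto simp: pi0_def FactGroup_def RCOSETS_def P_def)

lemma P_one: "P \<one>\<^bsub>G 0\<^esub> = \<one>\<^bsub>pi0 G d\<^esub>"
  using group_hom.hom_one[of "G 0" "pi0 G d" P] P_hom G0 pi0_group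
  by (simp add: group_hom_def group_hom_axioms_def)

lemma P_eqI: "k \<in> B0 G d \<Longrightarrow> h \<in> carrier (G 0) \<Longrightarrow> P (k \<otimes>\<^bsub>G 0\<^esub> h) = P h"
proof -
  assume k: "k \<in> B0 G d" and h: "h \<in> carrier (G 0)"
  interpret G0: group "G 0" by (rule G0)
  have "k \<otimes>\<^bsub>G 0\<^esub> h \<in> B0 G d #>\<^bsub>G 0\<^esub> h" using k h unfolding r_coset_def by auto
  then show ?thesis unfolding P_def using G0.repr_independence[OF _ h B0_sub] by simp
qed

lemma P_eqD: assumes g: "g \<in> carrier (G 0)" and h: "h \<in> carrier (G 0)" and e: "P g = P h"
  shows "\<exists>k\<in>B0 G d. g = k \<otimes>\<^bsub>G 0\<^esub> h"
proof -
  interpret G0: group "G 0" by (rule G0)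
  have "g \<in> P h" using e G0.rcos_self[OF g B0_sub] unfolding P_def by simp
  then show ?thesis unfolding P_def r_coset_def by auto
qed

lemma P_eqD1: assumes g: "g \<in> carrier (G 0)" and h: "h \<in> carrier (G 0)" and e: "P g = P h"
  shows "\<exists>y\<in>carrier (G 1). d 1 0 y = g \<and> d 1 1 y = h"
proof -
  obtain k where k: "k \<in> B0 G d" "g = k \<otimes>\<^bsub>G 0\<^esub> h" using P_eqD[OF g h e] by blast
  then obtain n where n: "n \<in> N1 G d" "k = d 1 0 n" unfolding B0_def by auto
  have nc: "n \<in> carrier (G 1)" using n N1D by auto
  show ?thesis
    by (rule bexI[of _ "n \<otimes>\<^bsub>G 1\<^esub> s 0 0 h"]) (use nc h n k N1D[OF n(1)] G0 in \<open>simp_all add: group.is_monoid monoid.l_one monoid.m_closed\<close>)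
qed

lemma P_d: assumes x: "x \<in> carrier (G 1)" shows "P (d 1 0 x) = P (d 1 1 x)"
proof -
  interpret G0: group "G 0" by (rule G0)
  interpret G1: group "G 1" by (rule G1)
  let ?n = "x \<otimes>\<^bsub>G 1\<^esub> inv\<^bsub>G 1\<^esub> (s 0 0 (d 1 1 x))"
  have nN: "?n \<in> N1 G d" using x by (intro N1I) (simp_all)
  have "?n \<otimes>\<^bsub>G 1\<^esub> s 0 0 (d 1 1 x) = x" using x by (simp add: G1.m_assoc)
  then have "d 1 0 x = d 1 0 ?n \<otimes>\<^bsub>G 0\<^esub> d 1 1 x"
    by (metis x nN N1D(1) mem hmult(1) fs(1))
  moreover have "d 1 0 ?n \<in> B0 G d" using nN unfolding B0_def by auto
  ultimately show ?thesis using P_eqI[of "d 1 0 ?n" "d 1 1 x"] x by simp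
qed

definition R :: "'a set \<Rightarrow> 'a" where "R X = (SOME g. g \<in> carrier (G 0) \<and> P g = X)"

lemma R: "X \<in> carrier (pi0 G d) \<Longrightarrow> R X \<in> carrier (G 0) \<and> P (R X) = X"
  unfolding R_def P_carrier by (rule someI_ex) auto

lemma R_mem[simp]: "X \<in> carrier (pi0 G d) \<Longrightarrow> R X \<in> carrier (G 0)" using R by blast
lemma PR[simp]: "X \<in> carrier (pi0 G d) \<Longrightarrow> P (R X) = X" using R by blast

end



lemma gX1: "[a] \<in> gX Q 1 \<longleftrightarrow> a \<in> carrier Q" by (simp add: gX_def)
lemma gX2: "[a,b] \<in> gX Q 2 \<longleftrightarrow> a \<in> carrier Q \<and> b \<in> carrier Q" by (simp add: gX_def)
lemma gX3: "[a,b,e] \<in> gX Q 3 \<longleftrightarrow> a \<in> carrier Q \<and> b \<in> carrier Q \<and> e \<in> carrier Q" by (simp add: gX_def)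
lemma gX1E: "xs \<in> gX Q 1 \<Longrightarrow> \<exists>a. xs = [a]"
  by (cases xs) (auto simp: gX_def)
lemma gX2E: "xs \<in> gX Q 2 \<Longrightarrow> \<exists>a b. xs = [a,b]"
  by (cases xs; cases "tl xs") (auto simp: gX_def numeral_2_eq_2)
lemma gX3E: "xs \<in> gX Q 3 \<Longrightarrow> \<exists>a b e. xs = [a,b,e]"
  apply (simp add: gX_def numeral_3_eq_3)
  by (metis length_0_conv length_Suc_conv)

lemma gdiff1_eq: "[a,b] \<in> gX Q 2 \<Longrightarrow> gdiff Q 1 f [a,b] = f[b] - f[a \<otimes>\<^bsub>Q\<^esub> b] + f[a]"
  by (simp add: gdiff_def Let_def numeral_eq_Suc upt_rec)
lemma gdiff2_eq: "[a,b,e] \<in> gX Q 3 \<Longrightarrow> gdiff Q 2 f [a,b,e] = f[b,e] - f[a \<otimes>\<^bsub>Q\<^esub> b, e] + f[a, b \<otimes>\<^bsub>Q\<^esub> e] - f[a,b]"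
  by (simp add: gdiff_def Let_def numeral_eq_Suc upt_rec)

lemma gdiff1_out: "xs \<notin> gX Q 2 \<Longrightarrow> gdiff Q 1 f xs = undefined"
  by (simp add: gdiff_def numeral_2_eq_2)
lemma gdiff2_out: "xs \<notin> gX Q 3 \<Longrightarrow> gdiff Q 2 f xs = undefined"
  by (simp add: gdiff_def numeral_3_eq_3)

lemma gdiff1_hom: assumes Q: "group Q"
  shows "gdiff Q 1 \<in> hom (cochain_grp (gX Q 1)) (cochain_grp (gX Q 2))"
proof (rule homI)
  fix f assume "f \<in> carrier (cochain_grp (gX Q 1))"
  show "gdiff Q 1 f \<in> carrier (cochain_grp (gX Q 2))"
    by (simp add: cochain_carrier gdiff_def numeral_2_eq_2)
next
  fix f f' assume f: "f \<in> carrier (cochain_grp (gX Q 1))" and f': "f' \<in> carrier (cochain_grp (gX Q 1))"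
  show "gdiff Q 1 (f \<otimes>\<^bsub>cochain_grp (gX Q 1)\<^esub> f') = gdiff Q 1 f \<otimes>\<^bsub>cochain_grp (gX Q 2)\<^esub> gdiff Q 1 f'"
  proof (rule ext)
    fix xs show "gdiff Q 1 (f \<otimes>\<^bsub>cochain_grp (gX Q 1)\<^esub> f') xs = (gdiff Q 1 f \<otimes>\<^bsub>cochain_grp (gX Q 2)\<^esub> gdiff Q 1 f') xs"
    proof (cases "xs \<in> gX Q 2")
      case True
      then obtain a b where xs: "xs = [a,b]" using gX2E by blast
      with True have ab: "a \<in> carrier Q" "b \<in> carrier Q" by (auto simp: gX2)
      have abQ: "a \<otimes>\<^bsub>Q\<^esub> b \<in> carrier Q" using ab Q by (simp add: group.is_monoid monoid.m_closed)
      show ?thesis using True ab abQ unfolding xs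
        by (simp add: gdiff1_eq cochain_mult gX1)
    next
      case False then show ?thesis by (simp add: gdiff1_out cochain_mult)
    qed
  qed
qed

lemma gdiff2_hom: assumes Q: "group Q"
  shows "gdiff Q 2 \<in> hom (cochain_grp (gX Q 2)) (cochain_grp (gX Q 3))"
proof (rule homI)
  fix f assume "f \<in> carrier (cochain_grp (gX Q 2))"
  show "gdiff Q 2 f \<in> carrier (cochain_grp (gX Q 3))"
    by (simp add: cochain_carrier gdiff_def numeral_3_eq_3)
next
  fix f f' assume f: "f \<in> carrier (cochain_grp (gX Q 2))" and f': "f' \<in> carrier (cochain_grp (gX Q 2))"
  show "gdiff Q 2 (f \<otimes>\<^bsub>cochain_grp (gX Q 2)\<^esub> f') = gdiff Q 2 f \<otimes>\<^bsub>cochain_grp (gX Q 3)\<^esub> gdiff Q 2 f'"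
  proof (rule ext)
    fix xs show "gdiff Q 2 (f \<otimes>\<^bsub>cochain_grp (gX Q 2)\<^esub> f') xs = (gdiff Q 2 f \<otimes>\<^bsub>cochain_grp (gX Q 3)\<^esub> gdiff Q 2 f') xs"
    proof (cases "xs \<in> gX Q 3")
      case True
      then obtain a b e where xs: "xs = [a,b,e]" using gX3E by blast
      with True have ab: "a \<in> carrier Q" "b \<in> carrier Q" "e \<in> carrier Q" by (auto simp: gX3)
      have abQ: "a \<otimes>\<^bsub>Q\<^esub> b \<in> carrier Q" "b \<otimes>\<^bsub>Q\<^esub> e \<in> carrier Q" using ab Q by (simp_all add: group.is_monoid monoid.m_closed)
      show ?thesis using True ab abQ unfolding xs
        by (simp add: gdiff2_eq cochain_mult gX2)
    next
      case False then show ?thesis by (simp add: gdiff2_out cochain_mult)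
    qed
  qed
qed

lemma gdd: assumes Q: "group Q" and f: "f \<in> carrier (cochain_grp (gX Q 1))"
  shows "gdiff Q 2 (gdiff Q 1 f) = \<one>\<^bsub>cochain_grp (gX Q 3)\<^esub>"
proof (rule ext)
  fix xs show "gdiff Q 2 (gdiff Q 1 f) xs = \<one>\<^bsub>cochain_grp (gX Q 3)\<^esub> xs"
  proof (cases "xs \<in> gX Q 3")
    case True
    then obtain a b e where xs: "xs = [a,b,e]" using gX3E by blast
    with True have ab: "a \<in> carrier Q" "b \<in> carrier Q" "e \<in> carrier Q" by (auto simp: gX3)
    interpret Q: group Q by (rule Q)
    show ?thesis using True ab unfolding xs
      by (simp add: gdiff2_eq gdiff1_eq cochain_one gX2 Q.m_assoc)
  next
    case False then show ?thesis by (simp add: gdiff2_out cochain_one)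
  qed
qed

context SG begin

lemma sX1: "[g] \<in> sX G 1 \<longleftrightarrow> g \<in> carrier (G 0)" by (simp add: sX_def)
lemma sX2: "[x,g] \<in> sX G 2 \<longleftrightarrow> x \<in> carrier (G 1) \<and> g \<in> carrier (G 0)"
  by (auto simp: sX_def less_Suc_eq numeral_2_eq_2 One_nat_def)
lemma sX3: "[u,x,g] \<in> sX G 3 \<longleftrightarrow> u \<in> carrier (G 2) \<and> x \<in> carrier (G 1) \<and> g \<in> carrier (G 0)"
  by (auto simp: sX_def less_Suc_eq numeral_3_eq_3 numeral_2_eq_2 One_nat_def)
lemma sX1E: "xs \<in> sX G 1 \<Longrightarrow> \<exists>a. xs = [a]"
  by (cases xs) (auto simp: sX_def)
lemma sX2E: "xs \<in> sX G 2 \<Longrightarrow> \<exists>a b. xs = [a,b]"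
  apply (simp add: sX_def numeral_2_eq_2)
  by (metis length_0_conv length_Suc_conv)
lemma sX3E: "xs \<in> sX G 3 \<Longrightarrow> \<exists>a b e. xs = [a,b,e]"
  apply (simp add: sX_def numeral_3_eq_3)
  by (metis length_0_conv length_Suc_conv)

lemma sdiff1_eq: "[x,g] \<in> sX G 2 \<Longrightarrow> sdiff G d 1 c [x,g] = c[d 1 0 x] - c[d 1 1 x \<otimes>\<^bsub>G 0\<^esub> g] + c[g]"
  by (simp add: sdiff_def Let_def numeral_eq_Suc upt_rec One_nat_def)
lemma sdiff2_eq: "[u,x,g] \<in> sX G 3 \<Longrightarrow> sdiff G d 2 c [u,x,g] = c[d 2 0 u, d 1 0 x] - c[d 2 1 u, d 1 1 x \<otimes>\<^bsub>G 0\<^esub> g] + c[d 2 2 u \<otimes>\<^bsub>G 1\<^esub> x, g] - c[x,g]"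
  by (simp add: sdiff_def Let_def numeral_eq_Suc upt_rec One_nat_def)
lemma sdiff1_out: "xs \<notin> sX G 2 \<Longrightarrow> sdiff G d 1 f xs = undefined"
  by (simp add: sdiff_def numeral_2_eq_2 One_nat_def)
lemma sdiff2_out: "xs \<notin> sX G 3 \<Longrightarrow> sdiff G d 2 f xs = undefined"
  by (simp add: sdiff_def numeral_3_eq_3)

lemma sdiff1_hom: "sdiff G d 1 \<in> hom (cochain_grp (sX G 1)) (cochain_grp (sX G 2))"
proof (rule homI)
  fix f assume "f \<in> carrier (cochain_grp (sX G 1))"
  show "sdiff G d 1 f \<in> carrier (cochain_grp (sX G 2))"
    by (simp add: cochain_carrier sdiff_def numeral_2_eq_2 One_nat_def)
next
  fix f f' assume f: "f \<in> carrier (cochain_grp (sX G 1))" and f': "f' \<in> carrier (cochain_grp (sX G 1))"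
  show "sdiff G d 1 (f \<otimes>\<^bsub>cochain_grp (sX G 1)\<^esub> f') = sdiff G d 1 f \<otimes>\<^bsub>cochain_grp (sX G 2)\<^esub> sdiff G d 1 f'"
  proof (rule ext)
    fix xs show "sdiff G d 1 (f \<otimes>\<^bsub>cochain_grp (sX G 1)\<^esub> f') xs = (sdiff G d 1 f \<otimes>\<^bsub>cochain_grp (sX G 2)\<^esub> sdiff G d 1 f') xs"
    proof (cases "xs \<in> sX G 2")
      case True
      then obtain a b where xs: "xs = [a,b]" using sX2E by blast
      with True have ab: "a \<in> carrier (G 1)" "b \<in> carrier (G 0)" by (auto simp: sX2)
      show ?thesis using True ab unfolding xs
        by (simp add: sdiff1_eq cochain_mult sX1)
    next
      case False then show ?thesis by (simp add: sdiff1_out cochain_mult)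
    qed
  qed
qed

lemma sdiff2_hom: "sdiff G d 2 \<in> hom (cochain_grp (sX G 2)) (cochain_grp (sX G 3))"
proof (rule homI)
  fix f assume "f \<in> carrier (cochain_grp (sX G 2))"
  show "sdiff G d 2 f \<in> carrier (cochain_grp (sX G 3))"
    by (simp add: cochain_carrier sdiff_def numeral_3_eq_3)
next
  fix f f' assume f: "f \<in> carrier (cochain_grp (sX G 2))" and f': "f' \<in> carrier (cochain_grp (sX G 2))"
  show "sdiff G d 2 (f \<otimes>\<^bsub>cochain_grp (sX G 2)\<^esub> f') = sdiff G d 2 f \<otimes>\<^bsub>cochain_grp (sX G 3)\<^esub> sdiff G d 2 f'"
  proof (rule ext)
    fix xs show "sdiff G d 2 (f \<otimes>\<^bsub>cochain_grp (sX G 2)\<^esub> f') xs = (sdiff G d 2 f \<otimes>\<^bsub>cochain_grp (sX G 3)\<^esub> sdiff G d 2 f') xs"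
    proof (cases "xs \<in> sX G 3")
      case True
      then obtain a b e where xs: "xs = [a,b,e]" using sX3E by blast
      with True have ab: "a \<in> carrier (G 2)" "b \<in> carrier (G 1)" "e \<in> carrier (G 0)" by (auto simp: sX3)
      show ?thesis using True ab unfolding xs
        by (simp add: sdiff2_eq cochain_mult sX2)
    next
      case False then show ?thesis by (simp add: sdiff2_out cochain_mult)
    qed
  qed
qed

lemma sdd: assumes f: "f \<in> carrier (cochain_grp (sX G 1))"
  shows "sdiff G d 2 (sdiff G d 1 f) = \<one>\<^bsub>cochain_grp (sX G 3)\<^esub>"
proof (rule ext)
  fix xs show "sdiff G d 2 (sdiff G d 1 f) xs = \<one>\<^bsub>cochain_grp (sX G 3)\<^esub> xs"
  proof (cases "xs \<in> sX G 3")
    case True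
    then obtain u x g where xs: "xs = [u,x,g]" using sX3E by blast
    with True have ab: "u \<in> carrier (G 2)" "x \<in> carrier (G 1)" "g \<in> carrier (G 0)" by (auto simp: sX3)
    interpret G0: group "G 0" by (rule G0)
    show ?thesis using True ab unfolding xs
      by (simp add: sdiff2_eq sdiff1_eq cochain_one sX2 G0.m_assoc)
  next
    case False then show ?thesis by (simp add: sdiff2_out cochain_one)
  qed
qed

end



context SG begin

abbreviation "Q \<equiv> pi0 G d"

definition phi2 :: "('a set list \<Rightarrow> int) \<Rightarrow> ('a list \<Rightarrow> int)" where
  "phi2 f = (\<lambda>xs \<in> sX G 2. f [P (d 1 0 (xs!0)), P (xs!1)])"
definition phi1 :: "('a set list \<Rightarrow> int) \<Rightarrow> ('a list \<Rightarrow> int)" where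
  "phi1 f = (\<lambda>xs \<in> sX G 1. f [P (xs!0)])"

lemma phi2_eq: "[x,g] \<in> sX G 2 \<Longrightarrow> phi2 f [x,g] = f [P (d 1 0 x), P g]"
  by (simp add: phi2_def)
lemma phi1_eq: "[g] \<in> sX G 1 \<Longrightarrow> phi1 f [g] = f [P g]"
  by (simp add: phi1_def)

lemma Pd[simp]: "x \<in> carrier (G 1) \<Longrightarrow> P (d 1 1 x) = P (d 1 0 x)"
  using P_d by simp

lemma phi2_hom: "phi2 \<in> hom (cochain_grp (gX Q 2)) (cochain_grp (sX G 2))"
proof (rule homI)
  fix f show "phi2 f \<in> carrier (cochain_grp (sX G 2))" by (simp add: cochain_carrier phi2_def)
next
  fix f f' assume f: "f \<in> carrier (cochain_grp (gX Q 2))" and f': "f' \<in> carrier (cochain_grp (gX Q 2))"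
  show "phi2 (f \<otimes>\<^bsub>cochain_grp (gX Q 2)\<^esub> f') = phi2 f \<otimes>\<^bsub>cochain_grp (sX G 2)\<^esub> phi2 f'"
  proof (rule ext)
    fix xs show "phi2 (f \<otimes>\<^bsub>cochain_grp (gX Q 2)\<^esub> f') xs = (phi2 f \<otimes>\<^bsub>cochain_grp (sX G 2)\<^esub> phi2 f') xs"
    proof (cases "xs \<in> sX G 2")
      case True
      then obtain a b where xs: "xs = [a,b]" using sX2E by blast
      with True have ab: "a \<in> carrier (G 1)" "b \<in> carrier (G 0)" by (auto simp: sX2)
      show ?thesis using True ab unfolding xs by (simp add: phi2_eq cochain_mult gX2)
    next
      case False then show ?thesis by (simp add: phi2_def cochain_mult)
    qed
  qed
qed

lemma phi2_gdiff: "phi2 (gdiff Q 1 b) = sdiff G d 1 (phi1 b)"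
proof (rule ext)
  fix xs show "phi2 (gdiff Q 1 b) xs = sdiff G d 1 (phi1 b) xs"
  proof (cases "xs \<in> sX G 2")
    case True
    then obtain x g where xs: "xs = [x,g]" using sX2E by blast
    with True have ab: "x \<in> carrier (G 1)" "g \<in> carrier (G 0)" by (auto simp: sX2)
    show ?thesis using True ab unfolding xs
      by (simp add: phi2_eq sdiff1_eq gdiff1_eq phi1_eq gX2 sX1 P_mult)
  next
    case False then show ?thesis by (simp add: phi2_def sdiff1_out)
  qed
qed

lemma phi2_sdiff: assumes "[u,x,g] \<in> sX G 3"
  shows "sdiff G d 2 (phi2 f) [u,x,g] = - gdiff Q 2 f [P (d 1 0 (d 2 0 u)), P (d 1 0 x), P g]"
proof -
  have ab: "u \<in> carrier (G 2)" "x \<in> carrier (G 1)" "g \<in> carrier (G 0)" using assms by (auto simp: sX3)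
  have e: "P (d 1 1 (d 2 0 u)) = P (d 1 0 (d 2 0 u))" using ab by simp
  show ?thesis using assms ab
    by (simp add: phi2_eq sdiff2_eq gdiff2_eq gX3 sX2 P_mult)
qed

end



context SG begin

lemma ker_part:
  assumes f: "f \<in> carrier (cochain_grp (gX Q 2))" and b: "b \<in> carrier (cochain_grp (sX G 1))"
    and e: "phi2 f = sdiff G d 1 b"
  shows "f \<in> gdiff Q 1 ` carrier (cochain_grp (gX Q 1))"
proof -
  interpret G0: group "G 0" by (rule G0)
  interpret G1: group "G 1" by (rule G1)
  have ev: "f [P (d 1 0 x), P g] = b [d 1 0 x] - b [d 1 1 x \<otimes>\<^bsub>G 0\<^esub> g] + b [g]"
    if "x \<in> carrier (G 1)" "g \<in> carrier (G 0)" for x g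
  proof -
    have "[x,g] \<in> sX G 2" using that by (simp add: sX2)
    then show ?thesis using fun_cong[OF e, of "[x,g]"] by (simp add: phi2_eq sdiff1_eq)
  qed
  have b1: "f [P h, P \<one>\<^bsub>G 0\<^esub>] = b [\<one>\<^bsub>G 0\<^esub>]" if "h \<in> carrier (G 0)" for h
    using ev[of "s 0 0 h" "\<one>\<^bsub>G 0\<^esub>"] that by simp
  have binv: "b [k \<otimes>\<^bsub>G 0\<^esub> h] = b [h]" if k: "k \<in> B0 G d" and h: "h \<in> carrier (G 0)" for k h
  proof -
    obtain n where n: "n \<in> N1 G d" "k = d 1 0 n" using k unfolding B0_def by auto
    have nc: "n \<in> carrier (G 1)" using n N1D by auto
    have kc: "k \<in> carrier (G 0)" using n nc by simp
    have "f [P (d 1 0 (n \<otimes>\<^bsub>G 1\<^esub> s 0 0 h)), P \<one>\<^bsub>G 0\<^esub>] = b [d 1 0 (n \<otimes>\<^bsub>G 1\<^esub> s 0 0 h)] - b [d 1 1 (n \<otimes>\<^bsub>G 1\<^esub> s 0 0 h) \<otimes>\<^bsub>G 0\<^esub> \<one>\<^bsub>G 0\<^esub>] + b [\<one>\<^bsub>G 0\<^esub>]"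
      using ev[of "n \<otimes>\<^bsub>G 1\<^esub> s 0 0 h" "\<one>\<^bsub>G 0\<^esub>"] nc h by simp
    then have "f [P (k \<otimes>\<^bsub>G 0\<^esub> h), P \<one>\<^bsub>G 0\<^esub>] = b [k \<otimes>\<^bsub>G 0\<^esub> h] - b [h] + b [\<one>\<^bsub>G 0\<^esub>]"
      using nc h n N1D[OF n(1)] by simp
    moreover have "P (k \<otimes>\<^bsub>G 0\<^esub> h) = P h" using P_eqI k h by simp
    ultimately show ?thesis using b1[OF h] by simp
  qed
  have bP: "b [g] = b [h]" if "g \<in> carrier (G 0)" "h \<in> carrier (G 0)" "P g = P h" for g h
    using P_eqD[OF that] binv that by auto
  define b' where "b' = (\<lambda>xs \<in> gX Q 1. b [R (xs!0)])"
  have b'c: "b' \<in> carrier (cochain_grp (gX Q 1))" by (simp add: b'_def cochain_carrier)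
  have "f = gdiff Q 1 b'"
  proof (rule ext)
    fix xs show "f xs = gdiff Q 1 b' xs"
    proof (cases "xs \<in> gX Q 2")
      case True
      then obtain q1 q2 where xs: "xs = [q1,q2]" using gX2E by blast
      with True have q: "q1 \<in> carrier Q" "q2 \<in> carrier Q" by (auto simp: gX2)
      let ?h = "R q1" and ?g = "R q2"
      have hg: "?h \<in> carrier (G 0)" "?g \<in> carrier (G 0)" using q by auto
      have "f [P ?h, P ?g] = b [?h] - b [?h \<otimes>\<^bsub>G 0\<^esub> ?g] + b [?g]"
        using ev[of "s 0 0 ?h" ?g] hg by simp
      then have 1: "f [q1, q2] = b [?h] - b [?h \<otimes>\<^bsub>G 0\<^esub> ?g] + b [?g]" using q by simp
      have qq: "q1 \<otimes>\<^bsub>Q\<^esub> q2 \<in> carrier Q" using q pi0_group by (simp add: group.is_monoid monoid.m_closed)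
      have "P (R (q1 \<otimes>\<^bsub>Q\<^esub> q2)) = P (?h \<otimes>\<^bsub>G 0\<^esub> ?g)" using qq q hg by (simp add: P_mult)
      then have 2: "b [R (q1 \<otimes>\<^bsub>Q\<^esub> q2)] = b [?h \<otimes>\<^bsub>G 0\<^esub> ?g]" using bP qq hg by simp
      show ?thesis using True q qq 1 2 unfolding xs by (simp add: gdiff1_eq b'_def gX1)
    next
      case False then show ?thesis using f by (simp add: gdiff1_out cochain_carrier PiE_def extensional_def)
    qed
  qed
  then show ?thesis using b'c by blast
qed

end



context SG begin

definition Z1 :: "'a set" where "Z1 = {g \<in> N1 G d. d 1 0 g = \<one>\<^bsub>G 0\<^esub>}"

lemma Z1D: "z \<in> Z1 \<Longrightarrow> z \<in> carrier (G 1)" "z \<in> Z1 \<Longrightarrow> d 1 0 z = \<one>\<^bsub>G 0\<^esub>" "z \<in> Z1 \<Longrightarrow> d 1 1 z = \<one>\<^bsub>G 0\<^esub>"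
  "z \<in> Z1 \<Longrightarrow> z \<in> N1 G d"
  by (auto simp: Z1_def N1_def)

lemma Z1_pow: assumes z: "z \<in> Z1" shows "z [^]\<^bsub>G 1\<^esub> (j::nat) \<in> Z1"
proof -
  interpret G0: group "G 0" by (rule G0)
  have "d 1 0 (z [^]\<^bsub>G 1\<^esub> j) = \<one>\<^bsub>G 0\<^esub>" "d 1 1 (z [^]\<^bsub>G 1\<^esub> j) = \<one>\<^bsub>G 0\<^esub>"
    using group_hom.hom_nat_pow[OF h10, of z j] group_hom.hom_nat_pow[OF h11, of z j] Z1D[OF z] by simp_all
  moreover have "z [^]\<^bsub>G 1\<^esub> j \<in> carrier (G 1)" using Z1D[OF z] G1 by (simp add: group.is_monoid monoid.nat_pow_closed)
  ultimately show ?thesis by (simp add: Z1_def N1_def)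
qed

lemma one_B1: "\<one>\<^bsub>G 1\<^esub> \<in> B1 G d"
proof -
  have "\<one>\<^bsub>G 2\<^esub> \<in> N2 G d" by (simp add: N2_def)
  then show ?thesis unfolding B1_def by (metis hone(3) image_eqI)
qed

lemma fin_pow: assumes fin: "finite (carrier (pi1 G d))" and z: "z \<in> Z1"
  shows "\<exists>j>0. z [^]\<^bsub>G 1\<^esub> (j::nat) \<in> B1 G d"
proof -
  interpret G1: group "G 1" by (rule G1)
  have zc: "z \<in> carrier (G 1)" using Z1D[OF z] by simp
  define F where "F j = B1 G d #>\<^bsub>G 1\<^esub> (z [^]\<^bsub>G 1\<^esub> (j::nat))" for j
  have "F j \<in> carrier (pi1 G d)" for j
  proof -
    have "z [^]\<^bsub>G 1\<^esub> j \<in> Z1" by (rule Z1_pow[OF z])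
    then show ?thesis unfolding pi1_def FactGroup_def RCOSETS_def F_def Z1_def r_coset_def by auto
  qed
  then have "F ` UNIV \<subseteq> carrier (pi1 G d)" by auto
  then have "finite (F ` UNIV)" using fin finite_subset by blast
  then have "\<not> inj F" using finite_imageD infinite_UNIV_nat by blast
  then obtain i j where ij: "i \<noteq> j" "F i = F j" unfolding inj_def by blast
  have key: "\<exists>j>0. z [^]\<^bsub>G 1\<^esub> (j::nat) \<in> B1 G d" if lt: "i < j" and e: "F i = F j" for i j
  proof -
    have "z [^]\<^bsub>G 1\<^esub> j \<in> F j" unfolding F_def r_coset_def using one_B1 zc by force
    then have "z [^]\<^bsub>G 1\<^esub> j \<in> F i" using e by simp
    then obtain b where b: "b \<in> B1 G d" "z [^]\<^bsub>G 1\<^esub> j = b \<otimes>\<^bsub>G 1\<^esub> z [^]\<^bsub>G 1\<^esub> i"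
      unfolding F_def r_coset_def by auto
    have bc: "b \<in> carrier (G 1)" using b(1) unfolding B1_def N2_def by auto
    have "z [^]\<^bsub>G 1\<^esub> (j - i) \<otimes>\<^bsub>G 1\<^esub> z [^]\<^bsub>G 1\<^esub> i = z [^]\<^bsub>G 1\<^esub> j"
      using G1.nat_pow_mult[OF zc, of "j - i" i] lt by simp
    then have "z [^]\<^bsub>G 1\<^esub> (j - i) = b" using b bc zc G1.right_cancel[of "z [^]\<^bsub>G 1\<^esub> (j - i)" "z [^]\<^bsub>G 1\<^esub> i" b] G1.nat_pow_closed by simp
    then show ?thesis using b(1) lt by (intro exI[of _ "j - i"]) simp
  qed
  show ?thesis using ij key by (cases "i < j") (auto simp: not_less_iff_gr_or_eq)
qed

end



context SG begin

definition cocyc :: "('a list \<Rightarrow> int) \<Rightarrow> bool" where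
  "cocyc c \<longleftrightarrow> (\<forall>u\<in>carrier (G 2). \<forall>x\<in>carrier (G 1). \<forall>g\<in>carrier (G 0).
     c [d 2 0 u, d 1 0 x] - c [d 2 1 u, d 1 1 x \<otimes>\<^bsub>G 0\<^esub> g] + c [d 2 2 u \<otimes>\<^bsub>G 1\<^esub> x, g] - c [x, g] = 0)"

lemma cocycI: assumes "sdiff G d 2 c = \<one>\<^bsub>cochain_grp (sX G 3)\<^esub>" shows "cocyc c"
  unfolding cocyc_def
proof (intro ballI)
  fix u x g assume "u \<in> carrier (G 2)" "x \<in> carrier (G 1)" "g \<in> carrier (G 0)"
  then have m: "[u,x,g] \<in> sX G 3" by (simp add: sX3)
  show "c [d 2 0 u, d 1 0 x] - c [d 2 1 u, d 1 1 x \<otimes>\<^bsub>G 0\<^esub> g] + c [d 2 2 u \<otimes>\<^bsub>G 1\<^esub> x, g] - c [x, g] = 0"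
    using fun_cong[OF assms, of "[u,x,g]"] m by (simp add: sdiff2_eq cochain_one)
qed

lemma cocyc_sdiff2: assumes "cocyc c" "[u,x,g] \<in> sX G 3" shows "sdiff G d 2 c [u,x,g] = 0"
  using assms by (simp add: sdiff2_eq cocyc_def sX3)

abbreviation "e0 \<equiv> \<one>\<^bsub>G 0\<^esub>"
abbreviation "e1 \<equiv> \<one>\<^bsub>G 1\<^esub>"
abbreviation "e2 \<equiv> \<one>\<^bsub>G 2\<^esub>"

lemma gl[simp]:
  "x \<in> carrier (G n) \<Longrightarrow> \<one>\<^bsub>G n\<^esub> \<otimes>\<^bsub>G n\<^esub> x = x"
  "x \<in> carrier (G n) \<Longrightarrow> x \<otimes>\<^bsub>G n\<^esub> \<one>\<^bsub>G n\<^esub> = x"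
  using grp[of n] by (simp_all add: group.is_monoid monoid.l_one monoid.r_one)

end

locale SGc = SG +
  fixes c :: "'a list \<Rightarrow> int"
  assumes cc: "cocyc c"
  assumes fin: "finite (carrier (pi1 G d))"
begin

lemma inst: "u \<in> carrier (G 2) \<Longrightarrow> x \<in> carrier (G 1) \<Longrightarrow> g \<in> carrier (G 0) \<Longrightarrow>
  c [d 2 0 u, d 1 0 x] - c [d 2 1 u, d 1 1 x \<otimes>\<^bsub>G 0\<^esub> g] + c [d 2 2 u \<otimes>\<^bsub>G 1\<^esub> x, g] - c [x, g] = 0"
  using cc by (simp add: cocyc_def)

definition "kap = c [e1, e0]"

lemma D1: "g \<in> carrier (G 0) \<Longrightarrow> c [e1, g] = kap"
  using inst[of e2 e1 g] by (simp add: kap_def)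

lemma D2: "y \<in> carrier (G 1) \<Longrightarrow> g \<in> carrier (G 0) \<Longrightarrow> c [y, g] = c [y, e0] + c [s 0 0 (d 1 1 y), g] - kap"
  using inst[of "s 1 0 y" e1 g] D1 by simp

lemma D3: "k \<in> carrier (G 0) \<Longrightarrow> h \<in> carrier (G 0) \<Longrightarrow> g \<in> carrier (G 0) \<Longrightarrow>
  c [s 0 0 k, h] - c [s 0 0 k, h \<otimes>\<^bsub>G 0\<^esub> g] + c [s 0 0 (k \<otimes>\<^bsub>G 0\<^esub> h), g] - c [s 0 0 h, g] = 0"
  using inst[of "s 1 0 (s 0 0 k)" "s 0 0 h" g] by simp

lemma D4: "y \<in> carrier (G 1) \<Longrightarrow> w \<in> carrier (G 1) \<Longrightarrow>
  c [s 0 0 (d 1 0 y), d 1 0 w] - c [y, d 1 1 w] + c [y \<otimes>\<^bsub>G 1\<^esub> w, e0] - c [w, e0] = 0"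
  using inst[of "s 1 1 y" w e0] by simp

lemma D5: "u \<in> N2 G d \<Longrightarrow> c [d 2 0 u, e0] = kap"
  using inst[of u e1 e0] by (simp add: N2_def kap_def)

lemma D6: "h \<in> carrier (G 0) \<Longrightarrow> c [s 0 0 h, e0] = kap"
  using D4[of "s 0 0 h" e1] by (simp add: kap_def)

lemma D7: "z \<in> Z1 \<Longrightarrow> w \<in> carrier (G 1) \<Longrightarrow> c [z \<otimes>\<^bsub>G 1\<^esub> w, e0] = c [z, e0] + c [w, e0] - kap"
  using D4[of z w] D2[of z "d 1 1 w"] Z1D[of z] D1 by simp

lemma D8: "z \<in> Z1 \<Longrightarrow> c [z [^]\<^bsub>G 1\<^esub> (j::nat), e0] = int j * (c [z, e0] - kap) + kap"
proof (induction j)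
  case 0 then show ?case by (simp add: kap_def)
next
  case (Suc j)
  have zc: "z \<in> carrier (G 1)" using Z1D Suc by auto
  have eq: "z [^]\<^bsub>G 1\<^esub> Suc j = z \<otimes>\<^bsub>G 1\<^esub> z [^]\<^bsub>G 1\<^esub> j"
    by (rule monoid.nat_pow_Suc2[OF group.is_monoid[OF G1] zc])
  have pc: "z [^]\<^bsub>G 1\<^esub> j \<in> carrier (G 1)" using Z1_pow[OF Suc.prems] Z1D by auto
  have "c [z [^]\<^bsub>G 1\<^esub> Suc j, e0] = c [z, e0] + c [z [^]\<^bsub>G 1\<^esub> j, e0] - kap"
    by (subst eq, rule D7[OF Suc.prems pc])
  then show ?case using Suc.IH[OF Suc.prems] by (simp add: algebra_simps)
qed

lemma D9: "z \<in> Z1 \<Longrightarrow> c [z, e0] = kap"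
proof -
  assume z: "z \<in> Z1"
  obtain j where j: "j > 0" "z [^]\<^bsub>G 1\<^esub> (j::nat) \<in> B1 G d" using fin_pow[OF fin z] by blast
  then obtain u where "u \<in> N2 G d" "z [^]\<^bsub>G 1\<^esub> j = d 2 0 u" unfolding B1_def by auto
  then have "c [z [^]\<^bsub>G 1\<^esub> j, e0] = kap" using D5 by simp
  then have "int j * (c [z, e0] - kap) = 0" using D8[OF z, of j] by simp
  then show ?thesis using j by simp
qed

lemma D10: assumes n: "n \<in> N1 G d" and m: "m \<in> N1 G d" and e: "d 1 0 n = d 1 0 m"
  shows "c [n, e0] = c [m, e0]"
proof -
  interpret G0: group "G 0" by (rule G0)
  interpret G1: group "G 1" by (rule G1)
  have nc: "n \<in> carrier (G 1)" and mc: "m \<in> carrier (G 1)" using n m N1D by auto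
  let ?z = "n \<otimes>\<^bsub>G 1\<^esub> inv\<^bsub>G 1\<^esub> m"
  have zZ: "?z \<in> Z1" using nc mc e N1D[OF n] N1D[OF m] by (simp add: Z1_def N1_def)
  have "?z \<otimes>\<^bsub>G 1\<^esub> m = n" using nc mc by (simp add: G1.m_assoc)
  then show ?thesis using D7[OF zZ mc] D9[OF zZ] by simp
qed

lemma D11: "n \<in> N1 G d \<Longrightarrow> h \<in> carrier (G 0) \<Longrightarrow>
    c [n \<otimes>\<^bsub>G 1\<^esub> s 0 0 h, e0] = kap + c [n, e0] - c [s 0 0 (d 1 0 n), h]"
  using D4[of n "s 0 0 h"] D2[of n h] N1D[of n] D1 D6 by simp

lemma D12: "n \<in> N1 G d \<Longrightarrow> w \<in> N1 G d \<Longrightarrow>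
    c [n \<otimes>\<^bsub>G 1\<^esub> w, e0] = c [w, e0] + c [n, e0] - c [s 0 0 (d 1 0 n), d 1 0 w]"
  using D4[of n w] D2[of n e0] N1D[of n] N1D[of w] D1 by simp

end



context SG begin

definition rep :: "'a \<Rightarrow> 'a" where "rep g = R (P g)"

lemma rep: "g \<in> carrier (G 0) \<Longrightarrow> rep g \<in> carrier (G 0) \<and> P (rep g) = P g"
  unfolding rep_def using R[of "P g"] by simp

lemma rep_B0: assumes g: "g \<in> carrier (G 0)" shows "g \<otimes>\<^bsub>G 0\<^esub> inv\<^bsub>G 0\<^esub> (rep g) \<in> B0 G d"
proof -
  interpret G0: group "G 0" by (rule G0)
  interpret B: subgroup "B0 G d" "G 0" by (rule B0_sub)
  obtain k where k: "k \<in> B0 G d" "rep g = k \<otimes>\<^bsub>G 0\<^esub> g" using P_eqD[of "rep g" g] rep[OF g] g by auto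
  have kc: "k \<in> carrier (G 0)" using k(1) B.subset by auto
  have "g \<otimes>\<^bsub>G 0\<^esub> inv\<^bsub>G 0\<^esub> (rep g) = inv\<^bsub>G 0\<^esub> k"
    using kc g k(2) by (simp add: G0.inv_mult_group G0.m_assoc[symmetric])
  then show ?thesis using k(1) by simp
qed

definition nu :: "'a \<Rightarrow> 'a" where
  "nu g = (SOME n. n \<in> N1 G d \<and> d 1 0 n = g \<otimes>\<^bsub>G 0\<^esub> inv\<^bsub>G 0\<^esub> (rep g))"

lemma nu: "g \<in> carrier (G 0) \<Longrightarrow> nu g \<in> N1 G d \<and> d 1 0 (nu g) = g \<otimes>\<^bsub>G 0\<^esub> inv\<^bsub>G 0\<^esub> (rep g)"
proof -
  assume g: "g \<in> carrier (G 0)"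
  have "g \<otimes>\<^bsub>G 0\<^esub> inv\<^bsub>G 0\<^esub> (rep g) \<in> d 1 0 ` N1 G d" using rep_B0[OF g] by (simp add: B0_def)
  then have "\<exists>n. n \<in> N1 G d \<and> d 1 0 n = g \<otimes>\<^bsub>G 0\<^esub> inv\<^bsub>G 0\<^esub> (rep g)" by (metis imageE)
  then show ?thesis unfolding nu_def by (rule someI_ex)
qed

end

context SGc begin

definition bb :: "'a \<Rightarrow> int" where
  "bb g = c [nu g, e0] - kap - c [s 0 0 (g \<otimes>\<^bsub>G 0\<^esub> inv\<^bsub>G 0\<^esub> (rep g)), rep g]"

lemma L: assumes x: "x \<in> carrier (G 1)" shows "c [x, e0] - kap = bb (d 1 0 x) - bb (d 1 1 x)"
proof -
  interpret G0: group "G 0" by (rule G0)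
  interpret G1: group "G 1" by (rule G1)
  interpret N: subgroup "N1 G d" "G 1" by (rule N1_sub)
  interpret B: subgroup "B0 G d" "G 0" by (rule B0_sub)
  define h where "h = d 1 1 x"
  have hc: "h \<in> carrier (G 0)" using x by (simp add: h_def)
  define n where "n = x \<otimes>\<^bsub>G 1\<^esub> inv\<^bsub>G 1\<^esub> (s 0 0 h)"
  have nN: "n \<in> N1 G d" using x hc by (intro N1I) (simp_all add: n_def h_def)
  have nc: "n \<in> carrier (G 1)" using nN N1D by auto
  have xn: "x = n \<otimes>\<^bsub>G 1\<^esub> s 0 0 h" using x hc by (simp add: n_def G1.m_assoc)
  define k where "k = d 1 0 n"
  have kB: "k \<in> B0 G d" using nN by (simp add: k_def B0_def)
  have kc: "k \<in> carrier (G 0)" using nc by (simp add: k_def)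
  have d0x: "d 1 0 x = k \<otimes>\<^bsub>G 0\<^esub> h" using nc hc by (subst xn) (simp add: k_def)
  have repkh: "rep (k \<otimes>\<^bsub>G 0\<^esub> h) = rep h" using P_eqI[OF kB hc] by (simp add: rep_def)
  define \<rho> where "\<rho> = rep h"
  have \<rho>c: "\<rho> \<in> carrier (G 0)" using rep[OF hc] by (simp add: \<rho>_def)
  define k' where "k' = h \<otimes>\<^bsub>G 0\<^esub> inv\<^bsub>G 0\<^esub> \<rho>"
  have k'c: "k' \<in> carrier (G 0)" using hc \<rho>c by (simp add: k'_def)
  have kh: "(k \<otimes>\<^bsub>G 0\<^esub> h) \<otimes>\<^bsub>G 0\<^esub> inv\<^bsub>G 0\<^esub> \<rho> = k \<otimes>\<^bsub>G 0\<^esub> k'"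
    using kc hc \<rho>c by (simp add: k'_def G0.m_assoc)
  have k'r: "k' \<otimes>\<^bsub>G 0\<^esub> \<rho> = h" using hc \<rho>c by (simp add: k'_def G0.m_assoc)
  have nuh: "nu h \<in> N1 G d" "d 1 0 (nu h) = k'" using nu[OF hc] by (simp_all add: k'_def \<rho>_def)
  have khc: "k \<otimes>\<^bsub>G 0\<^esub> h \<in> carrier (G 0)" using kc hc by simp
  have nukh: "nu (k \<otimes>\<^bsub>G 0\<^esub> h) \<in> N1 G d" "d 1 0 (nu (k \<otimes>\<^bsub>G 0\<^esub> h)) = k \<otimes>\<^bsub>G 0\<^esub> k'"
    using nu[OF khc] kh repkh by (simp_all add: \<rho>_def)
  have nnu: "n \<otimes>\<^bsub>G 1\<^esub> nu h \<in> N1 G d" using nN nuh by simp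
  have nuhc: "nu h \<in> carrier (G 1)" using nuh N1D by auto
  have "d 1 0 (n \<otimes>\<^bsub>G 1\<^esub> nu h) = k \<otimes>\<^bsub>G 0\<^esub> k'" using nc nuhc nuh by (simp add: k_def)
  then have e1: "c [nu (k \<otimes>\<^bsub>G 0\<^esub> h), e0] = c [nu h, e0] + c [n, e0] - c [s 0 0 k, k']"
    using D10[OF nukh(1) nnu] nukh(2) D12[OF nN nuh(1)] nuh(2) by (simp add: k_def)
  have e2: "c [x, e0] = kap + c [n, e0] - c [s 0 0 k, h]"
    using D11[OF nN hc] xn by (simp add: k_def)
  have e3: "c [s 0 0 k, k'] - c [s 0 0 k, h] + c [s 0 0 (k \<otimes>\<^bsub>G 0\<^esub> k'), \<rho>] - c [s 0 0 k', \<rho>] = 0"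
    using D3[OF kc k'c \<rho>c] k'r by simp
  have b1: "bb (d 1 0 x) = c [nu (k \<otimes>\<^bsub>G 0\<^esub> h), e0] - kap - c [s 0 0 (k \<otimes>\<^bsub>G 0\<^esub> k'), \<rho>]"
    unfolding bb_def d0x repkh using kh by (simp add: \<rho>_def)
  have b2: "bb (d 1 1 x) = c [nu h, e0] - kap - c [s 0 0 k', \<rho>]"
    unfolding bb_def h_def[symmetric] by (simp add: \<rho>_def k'_def)
  show ?thesis using e1 e2 e3 b1 b2 by simp
qed

end



context SGc begin

definition bC :: "'a list \<Rightarrow> int" where "bC = (\<lambda>xs \<in> sX G 1. bb (xs!0))"
lemma bC_car: "bC \<in> carrier (cochain_grp (sX G 1))" by (simp add: bC_def cochain_carrier)
lemma bC_eq: "g \<in> carrier (G 0) \<Longrightarrow> bC [g] = bb g" by (simp add: bC_def sX1)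

definition E :: "'a list \<Rightarrow> int" where "E = (\<lambda>xs \<in> sX G 2. c xs - sdiff G d 1 bC xs)"

lemma E_eq: "x \<in> carrier (G 1) \<Longrightarrow> g \<in> carrier (G 0) \<Longrightarrow>
   E [x, g] = c [x, g] - (bb (d 1 0 x) - bb (d 1 1 x \<otimes>\<^bsub>G 0\<^esub> g) + bb g)"
  by (simp add: E_def sX2 sdiff1_eq bC_eq)

lemma E_cocyc: "cocyc E"
  unfolding cocyc_def
proof (intro ballI)
  fix u x g assume u: "u \<in> carrier (G 2)" and x: "x \<in> carrier (G 1)" and g: "g \<in> carrier (G 0)"
  then have m: "[u,x,g] \<in> sX G 3" by (simp add: sX3)
  have "sdiff G d 2 (sdiff G d 1 bC) [u,x,g] = 0" using sdd[OF bC_car] m by (simp add: cochain_one)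
  then have "sdiff G d 1 bC [d 2 0 u, d 1 0 x] - sdiff G d 1 bC [d 2 1 u, d 1 1 x \<otimes>\<^bsub>G 0\<^esub> g]
     + sdiff G d 1 bC [d 2 2 u \<otimes>\<^bsub>G 1\<^esub> x, g] - sdiff G d 1 bC [x, g] = 0"
    using m by (simp add: sdiff2_eq)
  moreover have "c [d 2 0 u, d 1 0 x] - c [d 2 1 u, d 1 1 x \<otimes>\<^bsub>G 0\<^esub> g] + c [d 2 2 u \<otimes>\<^bsub>G 1\<^esub> x, g] - c [x, g] = 0"
    using inst u x g by simp
  ultimately show "E [d 2 0 u, d 1 0 x] - E [d 2 1 u, d 1 1 x \<otimes>\<^bsub>G 0\<^esub> g] + E [d 2 2 u \<otimes>\<^bsub>G 1\<^esub> x, g] - E [x, g] = 0"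
    using u x g by (simp add: E_def sX2)
qed

lemma Einst: "u \<in> carrier (G 2) \<Longrightarrow> x \<in> carrier (G 1) \<Longrightarrow> g \<in> carrier (G 0) \<Longrightarrow>
  E [d 2 0 u, d 1 0 x] - E [d 2 1 u, d 1 1 x \<otimes>\<^bsub>G 0\<^esub> g] + E [d 2 2 u \<otimes>\<^bsub>G 1\<^esub> x, g] - E [x, g] = 0"
  using E_cocyc by (simp add: cocyc_def)

lemma EP1: "x \<in> carrier (G 1) \<Longrightarrow> g \<in> carrier (G 0) \<Longrightarrow> E [x, g] = E [s 0 0 (d 1 1 x), g]"
  using E_eq[of x g] E_eq[of "s 0 0 (d 1 1 x)" g] D2[of x g] L[of x] by simp

lemma EP2: "y \<in> carrier (G 1) \<Longrightarrow> E [y, e0] = E [e1, e0]"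
proof -
  assume y: "y \<in> carrier (G 1)"
  have "E [s 0 0 (d 1 1 y), e0] = E [e1, e0]"
    using Einst[of "s 1 1 (s 0 0 (d 1 1 y))" e1 e0] y by simp
  then show ?thesis using EP1[OF y, of e0] by simp
qed

lemma EQ1: "y \<in> carrier (G 1) \<Longrightarrow> g \<in> carrier (G 0) \<Longrightarrow> E [s 0 0 (d 1 0 y), g] = E [s 0 0 (d 1 1 y), g]"
  using Einst[of "s 1 1 y" "s 0 0 g" e0] EP1[of y g] EP2[of "y \<otimes>\<^bsub>G 1\<^esub> s 0 0 g"] EP2[of "s 0 0 g"] by simp

lemma EQ2: "h \<in> carrier (G 0) \<Longrightarrow> y \<in> carrier (G 1) \<Longrightarrow> E [s 0 0 h, d 1 0 y] = E [s 0 0 h, d 1 1 y]"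
  using Einst[of "s 1 0 (s 0 0 h)" y e0] EP2[of "s 0 0 h \<otimes>\<^bsub>G 1\<^esub> y"] EP2[of y] by simp

lemma Einv: assumes "h \<in> carrier (G 0)" "h' \<in> carrier (G 0)" "g \<in> carrier (G 0)" "g' \<in> carrier (G 0)"
  and "P h = P h'" "P g = P g'" shows "E [s 0 0 h, g] = E [s 0 0 h', g']"
proof -
  obtain y where y: "y \<in> carrier (G 1)" "d 1 0 y = h" "d 1 1 y = h'" using P_eqD1 assms by blast
  obtain z where z: "z \<in> carrier (G 1)" "d 1 0 z = g" "d 1 1 z = g'" using P_eqD1 assms by blast
  show ?thesis using EQ1[OF y(1) assms(3)] EQ2[OF assms(2) z(1)] y z by simp
qed

lemma Efinal: assumes x: "x \<in> carrier (G 1)" and g: "g \<in> carrier (G 0)"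
  shows "E [x, g] = E [s 0 0 (R (P (d 1 0 x))), R (P g)]"
proof -
  have "E [x, g] = E [s 0 0 (d 1 1 x), g]" by (rule EP1[OF x g])
  also have "\<dots> = E [s 0 0 (R (P (d 1 0 x))), R (P g)]"
    using x g by (intro Einv) simp_all
  finally show ?thesis .
qed

definition fE :: "'a set list \<Rightarrow> int" where
  "fE = (\<lambda>xs \<in> gX Q 2. E [s 0 0 (R (xs!0)), R (xs!1)])"

lemma E_phi2: "E = phi2 fE"
proof (rule ext)
  fix xs show "E xs = phi2 fE xs"
  proof (cases "xs \<in> sX G 2")
    case True
    then obtain x g where xs: "xs = [x,g]" using sX2E by blast
    with True have ab: "x \<in> carrier (G 1)" "g \<in> carrier (G 0)" by (auto simp: sX2)
    show ?thesis using True ab Efinal[OF ab] unfolding xs by (simp add: phi2_eq fE_def gX2)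
  next
    case False then show ?thesis by (simp add: phi2_def E_def)
  qed
qed

lemma fE_cocycle: "gdiff Q 2 fE = \<one>\<^bsub>cochain_grp (gX Q 3)\<^esub>"
proof (rule ext)
  fix xs show "gdiff Q 2 fE xs = \<one>\<^bsub>cochain_grp (gX Q 3)\<^esub> xs"
  proof (cases "xs \<in> gX Q 3")
    case True
    then obtain A B C where xs: "xs = [A,B,C]" using gX3E by blast
    with True have q: "A \<in> carrier Q" "B \<in> carrier Q" "C \<in> carrier Q" by (auto simp: gX3)
    let ?u = "s 1 0 (s 0 0 (R A))" and ?x = "s 0 0 (R B)" and ?g = "R C"
    have m: "[?u, ?x, ?g] \<in> sX G 3" using q by (simp add: sX3)
    have "sdiff G d 2 (phi2 fE) [?u, ?x, ?g] = 0"
      using cocyc_sdiff2[OF E_cocyc m] E_phi2 by simp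
    then have "gdiff Q 2 fE [P (d 1 0 (d 2 0 ?u)), P (d 1 0 ?x), P ?g] = 0"
      using phi2_sdiff[OF m, of fE] by simp
    then show ?thesis using q unfolding xs by (simp add: cochain_one gX3)
  next
    case False then show ?thesis by (simp add: gdiff2_out cochain_one)
  qed
qed

lemma surj_part: assumes cC: "c \<in> carrier (cochain_grp (sX G 2))"
  shows "fE \<in> carrier (Zgrp (gX Q 2) (gX Q 3) (gdiff Q 2))"
    and "c = phi2 fE \<otimes>\<^bsub>cochain_grp (sX G 2)\<^esub> sdiff G d 1 bC"
proof -
  show "fE \<in> carrier (Zgrp (gX Q 2) (gX Q 3) (gdiff Q 2))"
    using fE_cocycle by (simp add: Zgrp_def cochain_carrier fE_def)
  show "c = phi2 fE \<otimes>\<^bsub>cochain_grp (sX G 2)\<^esub> sdiff G d 1 bC"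
    unfolding E_phi2[symmetric] cochain_mult
  proof (rule ext)
    fix xs show "c xs = (\<lambda>a\<in>sX G 2. E a + sdiff G d 1 bC a) xs"
      using cC by (cases "xs \<in> sX G 2") (auto simp: E_def cochain_carrier PiE_def extensional_def)
  qed
qed

end



lemma sgrp_cohom2: "sgrp_cohom G d 2 = cohom_grp (sX G 2) (sX G 3) (sdiff G d 2) (sdiff G d 1 ` carrier (cochain_grp (sX G 1)))"
  by (simp add: sgrp_cohom_def One_nat_def)
lemma grp_cohom2: "grp_cohom Q 2 = cohom_grp (gX Q 2) (gX Q 3) (gdiff Q 2) (gdiff Q 1 ` carrier (cochain_grp (gX Q 1)))"
  by (simp add: grp_cohom_def One_nat_def)

theorem mainTheorem17:
  fixes G :: "nat \<Rightarrow> 'a monoid"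
    and d :: "nat \<Rightarrow> nat \<Rightarrow> 'a \<Rightarrow> 'a"
    and s :: "nat \<Rightarrow> nat \<Rightarrow> 'a \<Rightarrow> 'a"
  assumes "simplicial_group G d s"
    and "finite (carrier (pi1 G d))"
  shows "sgrp_cohom G d 2 \<cong> grp_cohom (pi0 G d) 2"
proof -
  interpret SG G d s by (rule SG.intro) (rule assms(1))
  define ZQ where "ZQ = Zgrp (gX Q 2) (gX Q 3) (gdiff Q 2)"
  define BQ where "BQ = gdiff Q 1 ` carrier (cochain_grp (gX Q 1))"
  define ZG where "ZG = Zgrp (sX G 2) (sX G 3) (sdiff G d 2)"
  define BG where "BG = sdiff G d 1 ` carrier (cochain_grp (sX G 1))"
  have HG: "sgrp_cohom G d 2 = ZG Mod BG" by (simp add: sgrp_cohom2 cohom_grp_Zgrp ZG_def BG_def)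
  have HQ: "grp_cohom Q 2 = ZQ Mod BQ" by (simp add: grp_cohom2 cohom_grp_Zgrp ZQ_def BQ_def)
  note Gf = cohom_facts[OF sdiff2_hom sdiff1_hom sdd, folded ZG_def BG_def]
  note Qf = cohom_facts[OF gdiff2_hom[OF pi0_group] gdiff1_hom[OF pi0_group] gdd[OF pi0_group], folded ZQ_def BQ_def]
  interpret ZGc: comm_group ZG unfolding ZG_def by (rule Zgrp_facts(1)[OF sdiff2_hom])
  interpret ZQc: comm_group ZQ unfolding ZQ_def by (rule Zgrp_facts(1)[OF gdiff2_hom[OF pi0_group]])
  interpret BGn: normal BG ZG by (rule Gf(2))
  interpret BGs: subgroup BG ZG by (rule Gf(1))
  have multG: "\<And>x y. x \<otimes>\<^bsub>ZG\<^esub> y = x \<otimes>\<^bsub>cochain_grp (sX G 2)\<^esub> y" by (simp add: ZG_def Zgrp_def)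
  have multQ: "\<And>x y. x \<otimes>\<^bsub>ZQ\<^esub> y = x \<otimes>\<^bsub>cochain_grp (gX Q 2)\<^esub> y" by (simp add: ZQ_def Zgrp_def)
  have carG: "carrier ZG = {c \<in> carrier (cochain_grp (sX G 2)). sdiff G d 2 c = \<one>\<^bsub>cochain_grp (sX G 3)\<^esub>}"
    by (simp add: ZG_def Zgrp_def)
  have carQ: "carrier ZQ = {c \<in> carrier (cochain_grp (gX Q 2)). gdiff Q 2 c = \<one>\<^bsub>cochain_grp (gX Q 3)\<^esub>}"
    by (simp add: ZQ_def Zgrp_def)
  have phi_car: "phi2 f \<in> carrier ZG" if f: "f \<in> carrier ZQ" for f
  proof -
    have "sdiff G d 2 (phi2 f) = \<one>\<^bsub>cochain_grp (sX G 3)\<^esub>"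
    proof (rule ext)
      fix xs show "sdiff G d 2 (phi2 f) xs = \<one>\<^bsub>cochain_grp (sX G 3)\<^esub> xs"
      proof (cases "xs \<in> sX G 3")
        case True
        then obtain u x g where xs: "xs = [u,x,g]" using sX3E by blast
        with True have ab: "u \<in> carrier (G 2)" "x \<in> carrier (G 1)" "g \<in> carrier (G 0)" by (auto simp: sX3)
        have "gdiff Q 2 f [P (d 1 0 (d 2 0 u)), P (d 1 0 x), P g] = 0"
          using fun_cong[OF conjunct2[OF f[unfolded carQ, simplified]], of "[P (d 1 0 (d 2 0 u)), P (d 1 0 x), P g]"] ab
          by (simp add: cochain_one gX3)
        then show ?thesis using phi2_sdiff[OF True[unfolded xs], of f] True unfolding xs by (simp add: cochain_one)
      next
        case False then show ?thesis by (simp add: sdiff2_out cochain_one)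
      qed
    qed
    moreover have "phi2 f \<in> carrier (cochain_grp (sX G 2))" by (simp add: cochain_carrier phi2_def)
    ultimately show ?thesis by (simp add: carG)
  qed
  have phi_hom: "phi2 \<in> hom ZQ ZG"
  proof (rule homI)
    fix f assume "f \<in> carrier ZQ" then show "phi2 f \<in> carrier ZG" by (rule phi_car)
  next
    fix f f' assume "f \<in> carrier ZQ" "f' \<in> carrier ZQ"
    then show "phi2 (f \<otimes>\<^bsub>ZQ\<^esub> f') = phi2 f \<otimes>\<^bsub>ZG\<^esub> phi2 f'"
      using phi2_hom unfolding multQ multG by (simp add: hom_def carQ)
  qed
  define h where "h = (\<lambda>a. BG #>\<^bsub>ZG\<^esub> a) \<circ> phi2"
  have h_hom: "h \<in> hom ZQ (ZG Mod BG)"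
    unfolding h_def by (rule hom_compose[OF phi_hom BGn.r_coset_hom_Mod])
  have h_eq: "h f = BG #>\<^bsub>ZG\<^esub> phi2 f" if "f \<in> carrier ZQ" for f
    by (simp add: h_def)
  have grpHG: "group (ZG Mod BG)" using Gf(3) by (simp add: cohom_grp_Zgrp ZG_def BG_def)
  interpret hh: group_hom ZQ "ZG Mod BG" h
    using h_hom grpHG ZQc.group_axioms by (simp add: group_hom_def group_hom_axioms_def)
  have surj: "h ` carrier ZQ = carrier (ZG Mod BG)"
  proof
    show "h ` carrier ZQ \<subseteq> carrier (ZG Mod BG)" using h_hom by (auto simp: hom_def)
  next
    show "carrier (ZG Mod BG) \<subseteq> h ` carrier ZQ"
    proof
      fix X assume "X \<in> carrier (ZG Mod BG)"
      then obtain c where c: "c \<in> carrier ZG" "X = BG #>\<^bsub>ZG\<^esub> c"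
        by (auto simp: FactGroup_def RCOSETS_def)
      have cC: "c \<in> carrier (cochain_grp (sX G 2))" and cz: "sdiff G d 2 c = \<one>\<^bsub>cochain_grp (sX G 3)\<^esub>"
        using c(1) carG by auto
      interpret SGc G d s c
        by (intro SGc.intro SGc_axioms.intro) (simp_all add: assms SG_axioms cocycI[OF cz])
      have fZ: "fE \<in> carrier ZQ" and ce: "c = phi2 fE \<otimes>\<^bsub>ZG\<^esub> sdiff G d 1 bC"
        using surj_part[OF cC] by (simp_all add: ZQ_def multG)
      have dB: "sdiff G d 1 bC \<in> BG" using bC_car by (simp add: BG_def)
      have dZ: "sdiff G d 1 bC \<in> carrier ZG" using dB subgroup.subset[OF Gf(1)] by auto
      have pZ: "phi2 fE \<in> carrier ZG" by (rule phi_car[OF fZ])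
      have "X = BG #>\<^bsub>ZG\<^esub> (sdiff G d 1 bC \<otimes>\<^bsub>ZG\<^esub> phi2 fE)"
        using c(2) ce ZGc.m_comm[OF pZ dZ] by simp
      also have "\<dots> = (BG #>\<^bsub>ZG\<^esub> sdiff G d 1 bC) #>\<^bsub>ZG\<^esub> phi2 fE"
        using ZGc.coset_mult_assoc[OF subgroup.subset[OF Gf(1)] dZ pZ] by simp
      also have "\<dots> = BG #>\<^bsub>ZG\<^esub> phi2 fE"
        using subgroup.rcos_const[OF Gf(1) ZGc.is_group dB] by simp
      also have "\<dots> = h fE" using h_eq[OF fZ] by simp
      finally show "X \<in> h ` carrier ZQ" using fZ by blast
    qed
  qed
  have ker: "kernel ZQ (ZG Mod BG) h = BQ"
  proof -
    have "f \<in> kernel ZQ (ZG Mod BG) h \<longleftrightarrow> f \<in> BQ" if fZ: "f \<in> carrier ZQ" for f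
    proof -
      have pZ: "phi2 f \<in> carrier ZG" by (rule phi_car[OF fZ])
      have fC: "f \<in> carrier (cochain_grp (gX Q 2))" using fZ carQ by auto
      have "f \<in> kernel ZQ (ZG Mod BG) h \<longleftrightarrow> BG #>\<^bsub>ZG\<^esub> phi2 f = BG"
        using fZ h_eq[OF fZ] by (simp add: kernel_def FactGroup_def)
      also have "\<dots> \<longleftrightarrow> phi2 f \<in> BG"
        using subgroup.rcos_const[OF Gf(1) ZGc.is_group] ZGc.rcos_self[OF pZ Gf(1)] by blast
      also have "\<dots> \<longleftrightarrow> f \<in> BQ"
      proof
        assume "phi2 f \<in> BG"
        then obtain b where b: "b \<in> carrier (cochain_grp (sX G 1))" "phi2 f = sdiff G d 1 b"
          unfolding BG_def by auto
        show "f \<in> BQ" using ker_part[OF fC b] by (simp add: BQ_def)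
      next
        assume "f \<in> BQ"
        then obtain b' where "b' \<in> carrier (cochain_grp (gX Q 1))" "f = gdiff Q 1 b'"
          unfolding BQ_def by auto
        then show "phi2 f \<in> BG" unfolding BG_def using phi2_gdiff[of b']
          by (auto simp: phi1_def cochain_carrier)
      qed
      finally show ?thesis .
    qed
    moreover have "BQ \<subseteq> carrier ZQ" using subgroup.subset[OF Qf(1)] .
    moreover have "kernel ZQ (ZG Mod BG) h \<subseteq> carrier ZQ" by (auto simp: kernel_def)
    ultimately show ?thesis by blast
  qed
  have "ZQ Mod BQ \<cong> ZG Mod BG" using hh.FactGroup_iso[OF surj] ker by simp
  then have "ZG Mod BG \<cong> ZQ Mod BQ"
    using group.iso_sym[of "ZQ Mod BQ"] Qf(3) by (simp add: cohom_grp_Zgrp ZQ_def BQ_def)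
  then show ?thesis using HG HQ by simp
qed



end
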